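(* Let $T$ be a coherent LCMM tree, $\boldsymbol\theta=\boldsymbol\theta(T)$, $\boldsymbol\eta=\boldsymbol\eta(T)$, and let $\boldsymbol\mu=\tilde{\boldsymbol p}(\boldsymbol\theta+\mathbf A\boldsymbol\eta)$ be the current LCMM price vector. Let $\alpha\in\Omega$ and $I=[\alpha,1)$. Consider the following procedure (Algorithm 3). Initialize $z\gets\mathit{root}$, $\mu_z\gets1$, $\mathit{price}\gets0$. While $\alpha_z\ne\alpha$ and $z$ is not a leaf of $T$: let $z_l=\mathrm{left}(z)$, $z_r=\mathrm{right}(z)$, $k=\mathrm{level}(z_l)$; compute $e_l=\exp\{(\theta_{z_l}+B_k\eta_{z_l})/b_k\}$, $e_r=\exp\{(\theta_{z_r}+B_k\eta_{z_r})/b_k\}$, $\mu_{z_l}\gets\frac{e_l}{e_l+e_r}\mu_z$, $\mu_{z_r}\gets\frac{e_r}{e_l+e_r}\mu_z$; if $\alpha<\alpha_{z_r}$ set $z\gets z_l$ and $\mathit{price}\gets\mathit{price}+\mu_{z_r}$, else set $z\gets z_r$. Return $\mathit{price}+\frac{\beta_z-\alpha}{\beta_z-\alpha_z}\mu_z$. Then every value $\mu_{z}$ computed equals the corresponding coordinate of $\boldsymbol\mu$, the procedure returns the LCMM price of the bundle security for $I$, namely $\sum_{u\in\mathcal Z_K:\ I_u\subseteq I}\mu_u$, and it runs in time $\mathcal O(\mathrm{prec}(\alpha))$ (arithmetic operations counted as unit cost), where $\mathrm{prec}(\alpha)$ is the smallest integer $k\ge0$ such that $\alpha$ is an integer multiple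 of $2^{-k}$.
   Context: Fix an integer $K\ge1$, $N=2^K$, $\Omega=\{j/N:j=0,\dots,N-1\}$. Let $T^*$ be the complete binary tree of depth $K$ whose nodes are intervals: the root (level $0$) has $I_{\mathit{root}}=[0,1)$, and each node $z$ at level $k<K$ with $I_z=[\alpha_z,\beta_z)$ has children $\mathrm{left}(z)$, $\mathrm{right}(z)$ at level $k+1$ with intervals $[\alpha_z,\frac{\alpha_z+\beta_z}2)$ and $[\frac{\alpha_z+\beta_z}2,\beta_z)$. Let $\mathcal Z^*$ be its node set, $\mathcal Z_k$ the nodes at level $k$, $\mathrm{level}(z)$ the level of $z$, and $\mathcal Y^*=\mathcal Z^*\setminus\mathcal Z_K$. Fix liquidity parameters $b_k>0$ ($k=0,\dots,K$) and set $B_\ell=\sum_{k=\ell+1}^K b_k$ for $\ell=-1,\dots,K$. For $\tilde{\boldsymbol\theta}\in\mathbb R^{\mathcal Z^*}$ the direct-sum price vector is $\tilde p_z(\tilde{\boldsymbol\theta})=e^{\tilde\theta_z/b_k}/\sum_{z'\in\mathcal Z_k}e^{\tilde\theta_{z'}/b_k}$ for $z\in\mathcal Z_k$ (the gradient of $\tilde C(\tilde{\boldsymbol\theta})=\sum_k b_k\log\sum_{z\in\mathcal Z_k}e^{\tilde\theta_z/b_k}$). The constraint matrix $\mathbf A\in\mathbb R^{\mathcal Z^*\times\mathcal Y^*}$ has entries $A_{zy}=B_{\mathrm{level}(z)}$ if $z=y$, $-b_{\mathrm{level}(z)}$ if $I_z\subsetneq I_y$, and $0$ otherwise. An LCMM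 tree $T$ is a subtree of $T^*$ containing the root in which each node has either zero or two children in $T$, each node $z$ annotated with reals $\theta_z$ and $\eta_z$ (with $\eta_z$ treated as $0$ if $z\in\mathcal Z_K$). It represents $\boldsymbol\theta(T)\in\mathbb R^{\mathcal Z^*}$ and $\boldsymbol\eta(T)\in\mathbb R^{\mathcal Y^*}$ whose coordinates equal the annotations for nodes in $T$ and are $0$ for nodes not in $T$. $T$ is coherent if $\mathbf A^\top\tilde{\boldsymbol p}(\boldsymbol\theta(T)+\mathbf A\boldsymbol\eta(T))=\mathbf 0$; in that case $\boldsymbol\eta(T)$ minimizes $\boldsymbol\eta\mapsto\tilde C(\boldsymbol\theta(T)+\mathbf A\boldsymbol\eta)$ and the LCMM price vector is $\tilde{\boldsymbol p}(\boldsymbol\theta(T)+\mathbf A\boldsymbol\eta(T))$. *)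

theory Defs
  imports Complex_Main "HOL-Library.While_Combinator"
begin

text \<open>Nodes of the complete binary tree T* are pairs (k, j): level k, index j < 2^k,
  with interval [j/2^k, (j+1)/2^k).\<close>

type_synonym node = "nat \<times> nat"

definition alpha_of :: "node \<Rightarrow> real" where
  "alpha_of z = real (snd z) / 2 ^ fst z"

definition beta_of :: "node \<Rightarrow> real" where
  "beta_of z = (real (snd z) + 1) / 2 ^ fst z"

definition interval_of :: "node \<Rightarrow> real set" where
  "interval_of z = {alpha_of z ..< beta_of z}"

definition level :: "node \<Rightarrow> nat" where
  "level z = fst z"

definition root :: node where
  "root = (0, 0)"

definition left :: "node \<Rightarrow> node" where
  "left z = (Suc (fst z), 2 * snd z)"

definition right :: "node \<Rightarrow> node" where
  "right z = (Suc (fst z), 2 * snd z + 1)"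

definition Zlev :: "nat \<Rightarrow> node set" where
  "Zlev k = {(k, j) | j. j < 2 ^ k}"

definition Zstar :: "nat \<Rightarrow> node set" where
  "Zstar K = (\<Union>k\<le>K. Zlev k)"

definition Ystar :: "nat \<Rightarrow> node set" where
  "Ystar K = Zstar K - Zlev K"

definition Omega :: "nat \<Rightarrow> real set" where
  "Omega K = {real j / 2 ^ K | j. j < 2 ^ K}"

definition Bsum :: "nat \<Rightarrow> (nat \<Rightarrow> real) \<Rightarrow> nat \<Rightarrow> real" where
  "Bsum K b l = (\<Sum>k\<in>{l<..K}. b k)"

definition ptilde :: "nat \<Rightarrow> (nat \<Rightarrow> real) \<Rightarrow> (node \<Rightarrow> real) \<Rightarrow> node \<Rightarrow> real" where
  "ptilde K b th z =
     exp (th z / b (level z)) / (\<Sum>z'\<in>Zlev (level z). exp (th z' / b (level z)))"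

definition Amat :: "nat \<Rightarrow> (nat \<Rightarrow> real) \<Rightarrow> node \<Rightarrow> node \<Rightarrow> real" where
  "Amat K b z y =
     (if z = y then Bsum K b (level z)
      else if interval_of z \<subset> interval_of y then - b (level z)
      else 0)"

definition Amult :: "nat \<Rightarrow> (nat \<Rightarrow> real) \<Rightarrow> (node \<Rightarrow> real) \<Rightarrow> node \<Rightarrow> real" where
  "Amult K b eta z = (\<Sum>y\<in>Ystar K. Amat K b z y * eta y)"

definition ATmult :: "nat \<Rightarrow> (nat \<Rightarrow> real) \<Rightarrow> (node \<Rightarrow> real) \<Rightarrow> node \<Rightarrow> real" where
  "ATmult K b p y = (\<Sum>z\<in>Zstar K. Amat K b z y * p z)"

text \<open>An LCMM tree: its node set S (a subtree of T* containing the root, closed under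
  parents, each node having zero or two children in S) plus annotations th, eta.\<close>
definition is_lcmm_tree :: "nat \<Rightarrow> node set \<Rightarrow> bool" where
  "is_lcmm_tree K S \<longleftrightarrow>
     S \<subseteq> Zstar K \<and> root \<in> S \<and>
     (\<forall>k j. (k, j) \<in> S \<and> 0 < k \<longrightarrow> (k - 1, j div 2) \<in> S) \<and>
     (\<forall>z\<in>S. left z \<in> S \<longleftrightarrow> right z \<in> S)"

definition is_leaf :: "node set \<Rightarrow> node \<Rightarrow> bool" where
  "is_leaf S z \<longleftrightarrow> left z \<notin> S \<and> right z \<notin> S"

definition theta_vec :: "node set \<Rightarrow> (node \<Rightarrow> real) \<Rightarrow> node \<Rightarrow> real" where
  "theta_vec S th z = (if z \<in> S then th z else 0)"

definition eta_vec :: "nat \<Rightarrow> node set \<Rightarrow> (node \<Rightarrow> real) \<Rightarrow> node \<Rightarrow> real" where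
  "eta_vec K S eta y = (if y \<in> S \<and> y \<in> Ystar K then eta y else 0)"

definition lcmm_price :: "nat \<Rightarrow> (nat \<Rightarrow> real) \<Rightarrow> node set \<Rightarrow> (node \<Rightarrow> real)
    \<Rightarrow> (node \<Rightarrow> real) \<Rightarrow> node \<Rightarrow> real" where
  "lcmm_price K b S th eta =
     ptilde K b (\<lambda>z. theta_vec S th z + Amult K b (eta_vec K S eta) z)"

definition coherent :: "nat \<Rightarrow> (nat \<Rightarrow> real) \<Rightarrow> node set \<Rightarrow> (node \<Rightarrow> real)
    \<Rightarrow> (node \<Rightarrow> real) \<Rightarrow> bool" where
  "coherent K b S th eta \<longleftrightarrow>
     (\<forall>y\<in>Ystar K. ATmult K b (lcmm_price K b S th eta) y = 0)"

definition prec :: "real \<Rightarrow> nat" where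
  "prec a = (LEAST k. \<exists>m::int. a = real_of_int m / 2 ^ k)"

text \<open>Algorithm 3. State: (current node z, mu_z, price, log of all computed
  (node, mu value) pairs, number of loop iterations performed).\<close>
type_synonym alg_state = "node \<times> real \<times> real \<times> (node \<times> real) list \<times> nat"

definition alg_init :: alg_state where
  "alg_init = (root, 1, 0, [(root, 1)], 0)"

definition alg_cond :: "node set \<Rightarrow> real \<Rightarrow> alg_state \<Rightarrow> bool" where
  "alg_cond S a st = (case st of (z, mz, pr, hist, n) \<Rightarrow>
     alpha_of z \<noteq> a \<and> \<not> is_leaf S z)"

definition alg_step :: "nat \<Rightarrow> (nat \<Rightarrow> real) \<Rightarrow> node set \<Rightarrow> (node \<Rightarrow> real)
    \<Rightarrow> (node \<Rightarrow> real) \<Rightarrow> real \<Rightarrow> alg_state \<Rightarrow> alg_state" where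
  "alg_step K b S th eta a st = (case st of (z, mz, pr, hist, n) \<Rightarrow>
     let zl = left z; zr = right z; k = level zl;
         el = exp ((theta_vec S th zl + Bsum K b k * eta_vec K S eta zl) / b k);
         er = exp ((theta_vec S th zr + Bsum K b k * eta_vec K S eta zr) / b k);
         ml = el / (el + er) * mz;
         mr = er / (el + er) * mz;
         hist' = hist @ [(zl, ml), (zr, mr)]
     in if a < alpha_of zr then (zl, ml, pr + mr, hist', Suc n)
        else (zr, mr, pr, hist', Suc n))"

definition alg_run :: "nat \<Rightarrow> (nat \<Rightarrow> real) \<Rightarrow> node set \<Rightarrow> (node \<Rightarrow> real)
    \<Rightarrow> (node \<Rightarrow> real) \<Rightarrow> real \<Rightarrow> alg_state option" where
  "alg_run K b S th eta a = while_option (alg_cond S a) (alg_step K b S th eta a) alg_init"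

definition alg_output :: "real \<Rightarrow> alg_state \<Rightarrow> real" where
  "alg_output a st = (case st of (z, mz, pr, hist, n) \<Rightarrow>
     pr + (beta_of z - a) / (beta_of z - alpha_of z) * mz)"

end

theory Submission
  imports Defs
begin

lemma div_char: "0 < (n::nat) \<Longrightarrow> j div n = i \<longleftrightarrow> i*n \<le> j \<and> j < (i+1)*n"
  by (metis add.commute div_nat_eqI dividend_less_div_times div_times_less_eq_dividend mult.commute mult_Suc plus_1_eq_Suc)

lemma nat_ineqs_iff:
  "(i*2^k \<le> j*(2::nat)^l \<and> (j+1)*2^l \<le> (i+1)*(2::nat)^k) \<longleftrightarrow> l \<le> k \<and> j div 2^(k-l) = i"
proof
  assume h: "i*2^k \<le> j*(2::nat)^l \<and> (j+1)*2^l \<le> (i+1)*(2::nat)^k"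
  have h2: "i*2^k \<le> j*(2::nat)^l" "j*2^l + 2^l \<le> i*2^k + (2::nat)^k" using h by (simp_all add: algebra_simps)
  have "(2::nat)^l \<le> 2^k" using h2 by linarith
  hence lk: "l \<le> k" by simp
  then obtain d where kd: "k = l + d" by (metis le_add_diff_inverse)
  have a1: "i*2^d*2^l \<le> j*2^l" using h kd by (simp add: power_add algebra_simps)
  have a2: "(j+1)*2^l \<le> ((i+1)*2^d)*2^l" using h kd by (simp add: power_add algebra_simps)
  have "i*2^d \<le> j" using a1 by simp
  moreover have "j + 1 \<le> (i+1)*2^d" using a2 by (simp only: mult_le_cancel2) simp
  ultimately have "i*2^d \<le> j" "j + 1 \<le> (i+1)*2^d" by simp_all
  thus "l \<le> k \<and> j div 2^(k-l) = i" using lk kd div_char[of "2^d" j i] by simp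
next
  assume h: "l \<le> k \<and> j div 2^(k-l) = i"
  then obtain d where kd: "k = l + d" by (metis le_add_diff_inverse)
  have b1: "i*2^d \<le> j" "j + 1 \<le> (i+1)*2^d" using h kd div_char[of "2^d" j i] by simp_all
  have "i*2^d*2^l \<le> j*2^l" using b1(1) by simp
  moreover have "(j+1)*2^l \<le> ((i+1)*2^d)*2^l" using b1(2) mult_le_mono1 by blast
  ultimately have "i*2^d*2^l \<le> j*2^l" "(j+1)*2^l \<le> (i+1)*2^d*2^l" by simp_all
  thus "i*2^k \<le> j*(2::nat)^l \<and> (j+1)*2^l \<le> (i+1)*(2::nat)^k" using kd
    by (simp_all add: power_add algebra_simps)
qed

lemma sub_iff: "interval_of (k,j) \<subseteq> interval_of (l,i) \<longleftrightarrow> l \<le> k \<and> j div 2^(k-l) = i"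
proof -
  have ne: "real j / 2^k < (real j + 1)/2^k" by (simp add: divide_strict_right_mono)
  have "interval_of (k,j) \<subseteq> interval_of (l,i) \<longleftrightarrow>
     real i/2^l \<le> real j/2^k \<and> (real j+1)/2^k \<le> (real i+1)/2^l"
    unfolding interval_of_def alpha_of_def beta_of_def using ne by auto
  also have "\<dots> \<longleftrightarrow> real (i*2^k) \<le> real (j*2^l) \<and> real ((j+1)*2^l) \<le> real ((i+1)*2^k)"
    by (simp add: field_simps)
  also have "\<dots> \<longleftrightarrow> (i*2^k \<le> j*(2::nat)^l \<and> (j+1)*2^l \<le> (i+1)*(2::nat)^k)"
    by (simp only: of_nat_le_iff)
  finally show ?thesis using nat_ineqs_iff by simp
qed

lemma psub_iff: "interval_of (k,j) \<subset> interval_of (l,i) \<longleftrightarrow> l < k \<and> j div 2^(k-l) = i"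
proof -
  have "interval_of (k,j) \<subset> interval_of (l,i) \<longleftrightarrow>
    interval_of (k,j) \<subseteq> interval_of (l,i) \<and> \<not> interval_of (l,i) \<subseteq> interval_of (k,j)" by auto
  also have "\<dots> \<longleftrightarrow> (l \<le> k \<and> j div 2^(k-l) = i) \<and> \<not> (k \<le> l \<and> i div 2^(l-k) = j)"
    by (simp only: sub_iff)
  also have "\<dots> \<longleftrightarrow> l < k \<and> j div 2^(k-l) = i" by (cases "l < k") auto
  finally show ?thesis .
qed

lemma Zlev_mem[simp]: "(k,j) \<in> Zlev k' \<longleftrightarrow> k = k' \<and> j < 2^k"
  by (auto simp: Zlev_def)
lemma Zstar_mem[simp]: "(k,j) \<in> Zstar K \<longleftrightarrow> k \<le> K \<and> j < 2^k"
  by (auto simp: Zstar_def)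
lemma Ystar_mem[simp]: "(k,j) \<in> Ystar K \<longleftrightarrow> k < K \<and> j < 2^k"
  by (cases "k = K") (auto simp: Ystar_def)
lemma finite_Zstar[simp]: "finite (Zstar K)"
proof -
  have "Zstar K \<subseteq> {..K} \<times> {..<2^K}"
  proof
    fix z assume "z \<in> Zstar K"
    then obtain k j where z: "z = (k,j)" "k \<le> K" "j < 2^k" by (cases z) auto
    have "(2::nat)^k \<le> 2^K" using z(2) by simp
    thus "z \<in> {..K} \<times> {..<2^K}" using z by (auto intro: less_le_trans)
  qed
  thus ?thesis by (rule finite_subset) auto
qed
lemma finite_Ystar[simp]: "finite (Ystar K)"
  unfolding Ystar_def by simp
lemma finite_Zlev[simp]: "finite (Zlev k)"
proof -
  have "Zlev k = (\<lambda>j. (k,j)) ` {..<2^k}" by (auto simp: Zlev_def)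
  thus ?thesis by simp
qed

lemma level_pair[simp]: "level (k,j) = k" by (simp add: level_def)

definition blk :: "(node \<Rightarrow> real) \<Rightarrow> nat \<Rightarrow> nat \<Rightarrow> nat \<Rightarrow> real" where
  "blk q k l i = (\<Sum>j\<in>{i*2^(k-l)..<(i+1)*2^(k-l)}. q (k,j))"

lemma blk_split:
  assumes "l < k"
  shows "blk q k l i = blk q k (Suc l) (2*i) + blk q k (Suc l) (2*i+1)"
proof -
  obtain e where e: "k - l = Suc e" using assms by (metis Suc_diff_Suc)
  have e2: "k - Suc l = e" using e by simp
  have eq1: "i*2^(k-l) = (2*i)*2^e" using e by simp
  have eq2: "(i+1)*2^(k-l) = (2*i+1+1)*2^e" using e by simp
  show ?thesis unfolding blk_def e2 eq1 eq2
    by (rule sum.atLeastLessThan_concat[symmetric]) auto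
qed

lemma blk_same: "blk q k k i = q (k,i)"
  by (simp add: blk_def)

lemma psub_set:
  assumes "i < 2^l"
  shows "{z\<in>Zstar K. interval_of z \<subset> interval_of (l,i)} =
    Sigma {l<..K} (\<lambda>k. {i*2^(k-l)..<(i+1)*2^(k-l)})"
proof (intro set_eqI)
  fix z :: node
  obtain k j where z: "z = (k,j)" by (cases z)
  show "z \<in> {z\<in>Zstar K. interval_of z \<subset> interval_of (l,i)} \<longleftrightarrow>
    z \<in> Sigma {l<..K} (\<lambda>k. {i*2^(k-l)..<(i+1)*2^(k-l)})"
  proof (cases "l < k")
    case True
    have p0: "(0::nat) < 2^(k-l)" by simp
    have "(i+1)*2^(k-l) \<le> 2^l * 2^(k-l)" using assms by (intro mult_le_mono1) simp
    also have "\<dots> = 2^k" using True by (simp add: power_add[symmetric])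
    finally have bnd: "(i+1)*2^(k-l) \<le> 2^k" .
    show ?thesis unfolding z using True div_char[OF p0, of j i] bnd
      by (auto simp: psub_iff intro: less_le_trans)
  next
    case False thus ?thesis unfolding z by (auto simp: psub_iff)
  qed
qed

locale L =
  fixes K :: nat and b :: "nat \<Rightarrow> real" and S :: "node set" and th eta :: "node \<Rightarrow> real"
  assumes bpos: "\<forall>k\<le>K. 0 < b k" and tree: "is_lcmm_tree K S" and coh: "coherent K b S th eta"
begin

abbreviation "p \<equiv> lcmm_price K b S th eta"
abbreviation "xv \<equiv> (\<lambda>z. theta_vec S th z + Amult K b (eta_vec K S eta) z)"

lemma p_eq: "p z = exp (xv z / b (level z)) / (\<Sum>z'\<in>Zlev (level z). exp (xv z' / b (level z)))"
  by (simp add: lcmm_price_def ptilde_def)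

lemma coh_eq:
  assumes "l < K" "i < 2^l"
  shows "Bsum K b l * p (l,i) = (\<Sum>k\<in>{l<..K}. b k * blk p k l i)"
proof -
  let ?y = "(l,i)"
  have y: "?y \<in> Ystar K" "?y \<in> Zstar K" using assms by auto
  have "0 = ATmult K b p ?y" using coh y unfolding coherent_def by auto
  also have "\<dots> = (\<Sum>z\<in>Zstar K. (if z = ?y then Bsum K b (level z) * p z else 0)
      + - (if interval_of z \<subset> interval_of ?y then b (level z) * p z else 0))"
    unfolding ATmult_def Amat_def by (intro sum.cong) auto
  also have "\<dots> = (\<Sum>z\<in>Zstar K. (if z = ?y then Bsum K b (level z) * p z else 0))
      - (\<Sum>z\<in>Zstar K. (if interval_of z \<subset> interval_of ?y then b (level z) * p z else 0))"
    by (simp add: sum_subtractf)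
  also have "\<dots> = Bsum K b l * p ?y - (\<Sum>z\<in>{z\<in>Zstar K. interval_of z \<subset> interval_of ?y}. b (level z) * p z)"
    using y by (simp add: sum.inter_filter)
  also have "(\<Sum>z\<in>{z\<in>Zstar K. interval_of z \<subset> interval_of ?y}. b (level z) * p z)
     = (\<Sum>k\<in>{l<..K}. b k * blk p k l i)"
  proof -
    have "(\<Sum>k\<in>{l<..K}. b k * blk p k l i) =
      (\<Sum>k\<in>{l<..K}. \<Sum>j\<in>{i*2^(k-l)..<(i+1)*2^(k-l)}. b (level (k,j)) * p (k,j))"
      by (simp add: blk_def sum_distrib_left)
    also have "\<dots> = (\<Sum>(k,j)\<in>Sigma {l<..K} (\<lambda>k. {i*2^(k-l)..<(i+1)*2^(k-l)}). b (level (k,j)) * p (k,j))"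
      by (rule sum.Sigma) auto
    finally show ?thesis unfolding psub_set[OF assms(2)] by (simp add: case_prod_beta' level_def)
  qed
  finally show ?thesis by simp
qed

lemma Bsum_pos: "l < K \<Longrightarrow> 0 < Bsum K b l"
  unfolding Bsum_def using bpos by (intro sum_pos) auto

lemma blk_eq:
  assumes "l \<le> k" "k \<le> K" "i < 2^l"
  shows "blk p k l i = p (l,i)"
  using assms
proof (induction "K - l" arbitrary: l i k)
  case 0
  hence "k = l" by simp
  thus ?case by (simp add: blk_same)
next
  case (Suc m)
  hence lK: "l < K" by simp
  have ci: "2*i < 2^Suc l" "2*i+1 < 2^Suc l" using Suc.prems by auto
  have IH: "\<And>k c. Suc l \<le> k \<Longrightarrow> k \<le> K \<Longrightarrow> c < 2^Suc l \<Longrightarrow> blk p k (Suc l) c = p (Suc l, c)"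
    using Suc.hyps(1)[of "Suc l"] Suc.hyps(2) by simp
  have split: "\<And>k. k \<in> {l<..K} \<Longrightarrow> blk p k l i = p (Suc l, 2*i) + p (Suc l, 2*i+1)"
    using blk_split IH ci by auto
  have "Bsum K b l * p (l,i) = (\<Sum>k\<in>{l<..K}. b k * (p (Suc l, 2*i) + p (Suc l, 2*i+1)))"
    unfolding coh_eq[OF lK Suc.prems(3)] using split by (intro sum.cong) auto
  also have "\<dots> = Bsum K b l * (p (Suc l, 2*i) + p (Suc l, 2*i+1))"
    by (simp add: Bsum_def sum_distrib_right)
  finally have "p (l,i) = p (Suc l, 2*i) + p (Suc l, 2*i+1)"
    using Bsum_pos[OF lK] by simp
  thus ?case using split Suc.prems by (cases "k = l") (auto simp: blk_same)
qed

lemma p_children: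
  assumes "l < K" "i < 2^l"
  shows "p (l,i) = p (Suc l, 2*i) + p (Suc l, 2*i+1)"
proof -
  have "p (l,i) = blk p (Suc l) l i" using blk_eq assms by simp
  also have "\<dots> = blk p (Suc l) (Suc l) (2*i) + blk p (Suc l) (Suc l) (2*i+1)"
    by (rule blk_split) simp
  finally show ?thesis by (simp add: blk_same)
qed

lemma p_root: "p (0,0) = 1"
proof -
  have "Zlev 0 = {(0,0)}" by (auto simp: Zlev_def)
  thus ?thesis by (simp add: p_eq level_def)
qed

end

lemma div_pow_comp: "a \<le> b \<Longrightarrow> b \<le> c \<Longrightarrow> (j::nat) div 2^(c-b) div 2^(b-a) = j div 2^(c-a)"
proof -
  assume "a \<le> b" "b \<le> c"
  hence "c - a = (c - b) + (b - a)" by simp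
  thus ?thesis by (simp add: power_add div_mult2_eq)
qed

lemma div2_cases: "(q::nat) div 2 = i \<Longrightarrow> q = 2*i \<or> q = 2*i+1" by arith

lemma div_child_Suc[simp]: "Suc (2*i) div (2*n) = (i::nat) div n"
  by (simp add: div_mult2_eq)

lemma div_child: "(2*i) div 2^(Suc e) = (i::nat) div 2^e" "(2*i+1) div 2^(Suc e) = (i::nat) div 2^e"
  by (simp_all add: div_mult2_eq)

lemma Amult_eq:
  "Amult K b (eta_vec K S eta) u = Bsum K b (level u) * eta_vec K S eta u +
     (\<Sum>y\<in>Ystar K. if interval_of u \<subset> interval_of y then - b (level u) * eta_vec K S eta y else 0)"
proof -
  have "Amult K b (eta_vec K S eta) u = (\<Sum>y\<in>Ystar K. (if u = y then Bsum K b (level u) * eta_vec K S eta y else 0)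
     + (if interval_of u \<subset> interval_of y then - b (level u) * eta_vec K S eta y else 0))"
    unfolding Amult_def Amat_def by (intro sum.cong) auto
  also have "\<dots> = (if u \<in> Ystar K then Bsum K b (level u) * eta_vec K S eta u else 0) +
     (\<Sum>y\<in>Ystar K. if interval_of u \<subset> interval_of y then - b (level u) * eta_vec K S eta y else 0)"
    by (simp add: sum.distrib)
  also have "(if u \<in> Ystar K then Bsum K b (level u) * eta_vec K S eta u else 0) = Bsum K b (level u) * eta_vec K S eta u"
    by (simp add: eta_vec_def)
  finally show ?thesis .
qed

lemma ancestor:
  assumes tr: "is_lcmm_tree K S"
  shows "(k,j) \<in> S \<Longrightarrow> l \<le> k \<Longrightarrow> (l, j div 2^(k-l)) \<in> S"
proof (induction k arbitrary: j)
  case 0 thus ?case by simp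
next
  case (Suc k)
  show ?case
  proof (cases "l = Suc k")
    case True thus ?thesis using Suc.prems by simp
  next
    case False
    hence lk: "l \<le> k" using Suc.prems by simp
    have "(k, j div 2) \<in> S" using tr Suc.prems unfolding is_lcmm_tree_def by force
    from Suc.IH[OF this lk] have "(l, j div 2 div 2^(k-l)) \<in> S" .
    moreover have "j div 2 div 2^(k-l) = j div 2^(Suc k - l)"
      using lk by (simp add: div_mult2_eq Suc_diff_le)
    ultimately show ?thesis by simp
  qed
qed

context L begin

lemma S_Zstar: "z \<in> S \<Longrightarrow> z \<in> Zstar K" using tree unfolding is_lcmm_tree_def by auto

lemma children_in: "z \<in> S \<Longrightarrow> \<not> is_leaf S z \<Longrightarrow> left z \<in> S \<and> right z \<in> S"
  using tree unfolding is_lcmm_tree_def is_leaf_def by auto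

lemma sib_cond:
  assumes "y \<in> Ystar K"
  shows "interval_of (Suc l, 2*i) \<subset> interval_of y \<longleftrightarrow> interval_of (l,i) \<subseteq> interval_of y"
    "interval_of (Suc l, 2*i+1) \<subset> interval_of y \<longleftrightarrow> interval_of (l,i) \<subseteq> interval_of y"
proof -
  obtain m c where y: "y = (m,c)" by (cases y)
  show "interval_of (Suc l, 2*i) \<subset> interval_of y \<longleftrightarrow> interval_of (l,i) \<subseteq> interval_of y"
  proof (cases "m \<le> l")
    case True
    hence "Suc l - m = Suc (l - m)" by (simp add: Suc_diff_le)
    hence "2*i div 2^(Suc l - m) = i div 2^(l-m)" by (simp only: div_child)
    thus ?thesis unfolding y psub_iff sub_iff using True by simp
  next
    case False thus ?thesis unfolding y psub_iff sub_iff by simp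
  qed
  show "interval_of (Suc l, 2*i+1) \<subset> interval_of y \<longleftrightarrow> interval_of (l,i) \<subseteq> interval_of y"
  proof (cases "m \<le> l")
    case True
    hence "Suc l - m = Suc (l - m)" by (simp add: Suc_diff_le)
    hence "(2*i+1) div 2^(Suc l - m) = i div 2^(l-m)" by (simp only: div_child)
    thus ?thesis unfolding y psub_iff sub_iff using True by simp
  next
    case False thus ?thesis unfolding y psub_iff sub_iff by simp
  qed
qed

lemma sibling:
  fixes l i
  defines "C \<equiv> (\<Sum>y\<in>Ystar K. if interval_of (l,i) \<subseteq> interval_of y then - b (Suc l) * eta_vec K S eta y else 0)"
  defines "E \<equiv> exp (C / b (Suc l)) / (\<Sum>z'\<in>Zlev (Suc l). exp (xv z' / b (Suc l)))"
  shows "p (Suc l, 2*i) = exp ((theta_vec S th (Suc l, 2*i) + Bsum K b (Suc l) * eta_vec K S eta (Suc l, 2*i)) / b (Suc l)) * E"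
    and "p (Suc l, 2*i+1) = exp ((theta_vec S th (Suc l, 2*i+1) + Bsum K b (Suc l) * eta_vec K S eta (Suc l, 2*i+1)) / b (Suc l)) * E"
proof -
  have c1: "(\<Sum>y\<in>Ystar K. if interval_of (Suc l, 2*i) \<subset> interval_of y then - b (Suc l) * eta_vec K S eta y else 0) = C"
    unfolding C_def by (intro sum.cong refl) (simp add: sib_cond(1))
  have c2: "(\<Sum>y\<in>Ystar K. if interval_of (Suc l, 2*i+1) \<subset> interval_of y then - b (Suc l) * eta_vec K S eta y else 0) = C"
    unfolding C_def apply (intro sum.cong refl) subgoal for y using sib_cond(2)[of y l i] by simp done
  have x1: "xv (Suc l, 2*i) = (theta_vec S th (Suc l, 2*i) + Bsum K b (Suc l) * eta_vec K S eta (Suc l, 2*i)) + C"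
    by (simp only: Amult_eq c1 level_pair add.assoc)
  have x2: "xv (Suc l, 2*i+1) = (theta_vec S th (Suc l, 2*i+1) + Bsum K b (Suc l) * eta_vec K S eta (Suc l, 2*i+1)) + C"
    by (simp only: Amult_eq c2 level_pair add.assoc)
  show "p (Suc l, 2*i) = exp ((theta_vec S th (Suc l, 2*i) + Bsum K b (Suc l) * eta_vec K S eta (Suc l, 2*i)) / b (Suc l)) * E"
    unfolding p_eq x1 E_def by (simp add: add_divide_distrib exp_add)
  show "p (Suc l, 2*i+1) = exp ((theta_vec S th (Suc l, 2*i+1) + Bsum K b (Suc l) * eta_vec K S eta (Suc l, 2*i+1)) / b (Suc l)) * E"
    unfolding p_eq x2 E_def by (simp add: add_divide_distrib exp_add)
qed

lemma below_leaf_notin: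
  assumes z: "(l,i) \<in> S" "is_leaf S (l,i)" and m: "l < m" and q: "(m,c) \<in> S" and c: "c div 2^(m-l) = i"
  shows False
proof -
  have "(Suc l, c div 2^(m - Suc l)) \<in> S" using ancestor[OF tree q] m by simp
  moreover have "c div 2^(m - Suc l) div 2^(Suc l - l) = c div 2^(m-l)"
    using m by (intro div_pow_comp) auto
  hence "c div 2^(m - Suc l) div 2 = i" using c by simp
  hence "c div 2^(m - Suc l) = 2*i \<or> c div 2^(m - Suc l) = 2*i+1" by (rule div2_cases)
  ultimately show False using z(2) unfolding is_leaf_def left_def right_def by auto
qed

lemma leaf_xv:
  assumes z: "(l,i) \<in> S" "is_leaf S (l,i)" and lK: "l < K" and j: "j div 2^(K-l) = i"
  shows "xv (K,j) = (\<Sum>y\<in>Ystar K. if interval_of (l,i) \<subseteq> interval_of y then - b K * eta_vec K S eta y else 0)"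
proof -
  have nS: "(K,j) \<notin> S" using below_leaf_notin[OF z lK _ j] by blast
  have "(\<Sum>y\<in>Ystar K. if interval_of (K,j) \<subset> interval_of y then - b K * eta_vec K S eta y else 0)
     = (\<Sum>y\<in>Ystar K. if interval_of (l,i) \<subseteq> interval_of y then - b K * eta_vec K S eta y else 0)"
  proof (intro sum.cong refl)
    fix y assume yY: "y \<in> Ystar K"
    obtain m c where y: "y = (m,c)" by (cases y)
    show "(if interval_of (K,j) \<subset> interval_of y then - b K * eta_vec K S eta y else 0) =
          (if interval_of (l,i) \<subseteq> interval_of y then - b K * eta_vec K S eta y else 0)"
    proof (cases "y \<in> S")
      case False thus ?thesis by (simp add: eta_vec_def)
    next
      case True
      have mK: "m < K" using yY y by simp
      have iff: "interval_of (K,j) \<subset> interval_of y \<longleftrightarrow> interval_of (l,i) \<subseteq> interval_of y"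
      proof (cases "m \<le> l")
        case True
        have "j div 2^(K-l) div 2^(l-m) = j div 2^(K-m)" using True lK by (intro div_pow_comp) auto
        thus ?thesis unfolding y psub_iff sub_iff using True mK j by auto
      next
        case False
        have "\<not> interval_of (K,j) \<subset> interval_of y"
        proof
          assume "interval_of (K,j) \<subset> interval_of y"
          hence cj: "c = j div 2^(K-m)" unfolding y psub_iff by simp
          have "j div 2^(K-m) div 2^(m-l) = j div 2^(K-l)" using False mK by (intro div_pow_comp) auto
          hence ci: "c div 2^(m-l) = i" using cj j by simp
          show False using below_leaf_notin[OF z _ _ ci] False True y by auto
        qed
        thus ?thesis unfolding y sub_iff using False by auto
      qed
      show ?thesis using iff by simp
    qed
  qed
  thus ?thesis unfolding Amult_eq level_pair using nS by (simp add: theta_vec_def eta_vec_def)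
qed

end

context L begin

lemma leaf_price:
  assumes z: "(l,i) \<in> S" "is_leaf S (l,i)" and j: "j div 2^(K-l) = i"
  shows "p (K,j) * 2^(K-l) = p (l,i)"
proof -
  have lK: "l \<le> K" and il: "i < 2^l" using S_Zstar[OF z(1)] by auto
  show ?thesis
  proof (cases "l = K")
    case True thus ?thesis using j by simp
  next
    case False
    hence lK': "l < K" using lK by simp
    have p0: "(0::nat) < 2^(K-l)" by simp
    have same: "p (K,j') = p (K,j)" if "j' \<in> {i*2^(K-l)..<(i+1)*2^(K-l)}" for j'
    proof -
      have "j' div 2^(K-l) = i" using that div_char[OF p0] by auto
      hence "xv (K,j') = xv (K,j)" using leaf_xv[OF z lK'] j by simp
      thus ?thesis by (simp add: p_eq)
    qed
    have "p (l,i) = blk p K l i" using blk_eq[OF lK order_refl il] by simp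
    also have "\<dots> = (\<Sum>j'\<in>{i*2^(K-l)..<(i+1)*2^(K-l)}. p (K,j))"
      unfolding blk_def using same by (intro sum.cong) auto
    also have "\<dots> = p (K,j) * 2^(K-l)" by (simp add: algebra_simps)
    finally show ?thesis by simp
  qed
qed

end

lemma real_frac_le: "real x / 2^K \<le> real y / 2^K \<longleftrightarrow> x \<le> y"
  by (simp add: divide_le_cancel)
lemma real_frac_less: "real x / 2^K < real y / 2^K \<longleftrightarrow> x < y"
  by (simp add: divide_less_cancel)
lemma real_frac_eq: "real x / 2^K = real y / 2^K \<longleftrightarrow> x = y"
  by simp

lemma alpha_K: "n \<le> K \<Longrightarrow> alpha_of (n,i) = real (i*2^(K-n)) / 2^K"
proof -
  assume "n \<le> K"
  hence "(2::real)^K = 2^n * 2^(K-n)" by (simp add: power_add[symmetric])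
  thus ?thesis unfolding alpha_of_def by simp
qed

lemma beta_K: "n \<le> K \<Longrightarrow> beta_of (n,i) = real ((i+1)*2^(K-n)) / 2^K"
proof -
  assume "n \<le> K"
  hence "(2::real)^K = 2^n * 2^(K-n)" by (simp add: power_add[symmetric])
  thus ?thesis unfolding beta_of_def by (simp add: field_simps)
qed

lemma prec_bound:
  assumes "i*2^(K-n) < j0" "j0 < (i+1)*2^(K-n)" "n \<le> K"
  shows "n < prec (real j0 / 2^K)"
proof (rule ccontr)
  assume "\<not> n < prec (real j0 / 2^K)"
  hence kn: "prec (real j0 / 2^K) \<le> n" by simp
  define k where "k = prec (real j0 / 2^K)"
  have ex: "\<exists>m::int. real j0 / 2^K = real_of_int m / 2^K" by (intro exI[of _ "int j0"]) simp
  have "\<exists>m::int. real j0 / 2^K = real_of_int m / 2^k"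
    unfolding k_def prec_def by (rule LeastI_ex) (use ex in blast)
  then obtain m :: int where m: "real j0 / 2^K = real_of_int m / 2^k" by blast
  have kK: "k \<le> n" "n \<le> K" using kn assms(3) unfolding k_def by auto
  have "(2::real)^K = 2^k * 2^(n-k) * 2^(K-n)" using kK by (simp add: power_add[symmetric])
  hence "real j0 = real_of_int m * 2^(n-k) * 2^(K-n)" using m by (simp add: field_simps)
  hence "real_of_int (int j0) = real_of_int ((m * 2^(n-k)) * 2^(K-n))" by simp
  hence jj: "int j0 = (m * 2^(n-k)) * 2^(K-n)" by (simp only: of_int_eq_iff)
  define c where "c = m * 2^(n-k)"
  define D where "D = (2::int)^(K-n)"
  have D0: "0 < D" unfolding D_def by simp
  have "int (i*2^(K-n)) < int j0" using assms(1) by (simp only: of_nat_less_iff)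
  hence "int i * D < c * D" using jj unfolding c_def D_def by simp
  hence "int i < c" using D0 by (simp add: mult_less_cancel_right)
  moreover have "int j0 < int ((i+1)*2^(K-n))" using assms(2) by (simp only: of_nat_less_iff)
  hence "c * D < (int i + 1) * D" using jj unfolding c_def D_def by (simp add: algebra_simps)
  hence "c < int i + 1" using D0 by (simp add: mult_less_cancel_right)
  ultimately show False by simp
qed

locale L2 = L +
  fixes j0 :: nat
  assumes j0: "j0 < 2^K"
begin

abbreviation "aa \<equiv> real j0 / 2^K"

definition Inv :: "alg_state \<Rightarrow> bool" where
  "Inv st = (case st of (z, mz, pr, hist, n) \<Rightarrow>
     z \<in> S \<and> fst z = n \<and> snd z * 2^(K-n) \<le> j0 \<and> j0 < (snd z + 1)*2^(K-n) \<and> mz = p z \<and>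
     pr = (\<Sum>j\<in>{(snd z+1)*2^(K-n)..<2^K}. p (K,j)) \<and> (\<forall>(u,m)\<in>set hist. m = p u) \<and> n \<le> prec aa)"

lemma Inv_simp: "Inv ((n',i), mz, pr, hist, n) \<longleftrightarrow>
     (n',i) \<in> S \<and> n' = n \<and> i * 2^(K-n) \<le> j0 \<and> j0 < (i + 1)*2^(K-n) \<and> mz = p (n',i) \<and>
     pr = (\<Sum>j\<in>{(i+1)*2^(K-n)..<2^K}. p (K,j)) \<and> (\<forall>(u,m)\<in>set hist. m = p u) \<and> n \<le> prec aa"
  by (auto simp: Inv_def)

lemma inv_init: "Inv alg_init"
proof -
  have "root \<in> S" using tree unfolding is_lcmm_tree_def by auto
  thus ?thesis unfolding alg_init_def root_def Inv_simp using j0 p_root by simp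
qed

lemma inv_step:
  assumes I: "Inv st" and c: "alg_cond S aa st"
  shows "Inv (alg_step K b S th eta aa st) \<and> (alg_step K b S th eta aa st, st) \<in> measure (\<lambda>s. K - fst (fst s))"
proof -
  obtain z mz pr hist n where st: "st = (z,mz,pr,hist,n)" by (cases st)
  obtain n' i where z: "z = (n',i)" by (cases z)
  have nn: "n' = n" using I unfolding st z Inv_simp by simp
  have zS: "(n,i) \<in> S" and i2: "i*2^(K-n) \<le> j0" and i3: "j0 < (i+1)*2^(K-n)" and mz: "mz = p (n,i)"
    and prv: "pr = (\<Sum>j\<in>{(i+1)*2^(K-n)..<2^K}. p (K,j))" and hist: "\<forall>(u,m)\<in>set hist. m = p u"
    using I unfolding st z Inv_simp nn by auto
  have alpha: "alpha_of (n,i) \<noteq> aa" and nl: "\<not> is_leaf S (n,i)"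
    using c unfolding st z nn alg_cond_def by auto
  have chS: "(Suc n, 2*i) \<in> S" "(Suc n, 2*i+1) \<in> S" using children_in[OF zS nl] by (auto simp: left_def right_def)
  have nK: "n < K" using S_Zstar[OF chS(1)] by simp
  have iless: "i < 2^n" using S_Zstar[OF zS] by simp
  obtain e where e: "K - n = Suc e" using nK by (metis Suc_diff_Suc)
  have e2: "K - Suc n = e" using e by simp
  have pw: "(2::nat)^(K-n) = 2 * 2^e" using e by simp
  have j0ne: "i*2^(K-n) \<noteq> j0"
  proof
    assume "i*2^(K-n) = j0"
    hence "alpha_of (n,i) = aa" using alpha_K[of n K i] nK by simp
    thus False using alpha by simp
  qed
  have prec': "Suc n \<le> prec aa" using prec_bound[of i K n j0] i2 j0ne i3 nK by simp
  define EL where "EL = exp ((theta_vec S th (Suc n, 2*i) + Bsum K b (Suc n) * eta_vec K S eta (Suc n, 2*i)) / b (Suc n))"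
  define ER where "ER = exp ((theta_vec S th (Suc n, 2*i+1) + Bsum K b (Suc n) * eta_vec K S eta (Suc n, 2*i+1)) / b (Suc n))"
  obtain E where pl: "p (Suc n, 2*i) = EL * E" and pr': "p (Suc n, 2*i+1) = ER * E"
    using sibling[of n i] unfolding EL_def ER_def by blast
  have pz: "p (n,i) = p (Suc n, 2*i) + p (Suc n, 2*i+1)" using p_children[OF nK iless] .
  have pos: "0 < EL + ER" unfolding EL_def ER_def by (intro add_pos_pos) auto
  have ml: "EL/(EL+ER) * mz = p (Suc n, 2*i)" using mz pz pl pr' pos by (simp add: field_simps)
  have mr: "ER/(EL+ER) * mz = p (Suc n, 2*i+1)" using mz pz pl pr' pos by (simp add: field_simps)
  have step: "alg_step K b S th eta aa st = (if aa < alpha_of (Suc n, 2*i+1)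
      then ((Suc n,2*i), EL/(EL+ER)*mz, pr + ER/(EL+ER)*mz,
             hist @ [((Suc n,2*i), EL/(EL+ER)*mz), ((Suc n,2*i+1), ER/(EL+ER)*mz)], Suc n)
      else ((Suc n,2*i+1), ER/(EL+ER)*mz, pr,
             hist @ [((Suc n,2*i), EL/(EL+ER)*mz), ((Suc n,2*i+1), ER/(EL+ER)*mz)], Suc n))"
    unfolding alg_step_def st z nn left_def right_def Let_def EL_def ER_def by simp
  have al: "alpha_of (Suc n, 2*i+1) = real ((2*i+1)*2^e)/2^K"
    using alpha_K[of "Suc n" K "2*i+1"] nK unfolding e2 by simp
  have cmp: "aa < alpha_of (Suc n, 2*i+1) \<longleftrightarrow> j0 < (2*i+1)*2^e"
    unfolding al by (rule real_frac_less)
  have bnd: "(i+1)*2^(K-n) \<le> 2^K"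
  proof -
    have "(i+1)*2^(K-n) \<le> 2^n * 2^(K-n)" using iless by (intro mult_le_mono1) simp
    also have "\<dots> = 2^K" using nK by (simp add: power_add[symmetric])
    finally show ?thesis .
  qed
  have hist': "\<forall>(u,m)\<in>set (hist @ [((Suc n,2*i), EL/(EL+ER)*mz), ((Suc n,2*i+1), ER/(EL+ER)*mz)]). m = p u"
    using hist ml mr by auto
  have meas: "K - Suc n < K - n" using nK by simp
  show ?thesis
  proof (cases "j0 < (2*i+1)*2^e")
    case True
    have sum: "(\<Sum>j\<in>{(2*i+1)*2^e..<2^K}. p (K,j)) = pr + p (Suc n, 2*i+1)"
    proof -
      have "(\<Sum>j\<in>{(2*i+1)*2^e..<2^K}. p (K,j)) = (\<Sum>j\<in>{(2*i+1)*2^e..<(2*i+1+1)*2^e}. p (K,j))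
          + (\<Sum>j\<in>{(2*i+1+1)*2^e..<2^K}. p (K,j))"
        using bnd pw by (intro sum.atLeastLessThan_concat[symmetric]) (auto simp: algebra_simps)
      also have "(\<Sum>j\<in>{(2*i+1)*2^e..<(2*i+1+1)*2^e}. p (K,j)) = blk p K (Suc n) (2*i+1)"
        unfolding blk_def e2 by simp
      also have "\<dots> = p (Suc n, 2*i+1)" using nK iless by (intro blk_eq) auto
      also have "(2*i+1+1)*2^e = (i+1)*2^(K-n)" using pw by simp
      finally show ?thesis using prv by simp
    qed
    have "Inv ((Suc n,2*i), EL/(EL+ER)*mz, pr + ER/(EL+ER)*mz,
             hist @ [((Suc n,2*i), EL/(EL+ER)*mz), ((Suc n,2*i+1), ER/(EL+ER)*mz)], Suc n)"
      unfolding Inv_simp e2 using chS True i2 pw ml mr sum hist' prec' by (auto simp: algebra_simps)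
    thus ?thesis using step cmp True meas st z nn by simp
  next
    case False
    have "Inv ((Suc n,2*i+1), ER/(EL+ER)*mz, pr,
             hist @ [((Suc n,2*i), EL/(EL+ER)*mz), ((Suc n,2*i+1), ER/(EL+ER)*mz)], Suc n)"
      unfolding Inv_simp e2 using chS False i3 pw ml mr prv hist' prec' by (auto simp: algebra_simps)
    thus ?thesis using step cmp False meas st z nn by simp
  qed
qed

end

context L2 begin

lemma target_set: "{u\<in>Zlev K. interval_of u \<subseteq> {aa..<1}} = Pair K ` {j0..<2^K}"
proof -
  have per: "interval_of (K,j) \<subseteq> {aa..<1} \<longleftrightarrow> j0 \<le> j \<and> j < 2^K" for j
  proof -
    have ne: "real j / 2^K < (real j + 1)/2^K" by (simp add: divide_strict_right_mono)
    have "interval_of (K,j) \<subseteq> {aa..<1} \<longleftrightarrow> aa \<le> real j/2^K \<and> (real j+1)/2^K \<le> 1"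
      unfolding interval_of_def alpha_of_def beta_of_def using ne by auto
    also have "aa \<le> real j/2^K \<longleftrightarrow> j0 \<le> j" by (rule real_frac_le)
    also have "(real j+1)/2^K \<le> 1 \<longleftrightarrow> real (Suc j) \<le> real ((2::nat)^K)" by (simp add: field_simps)
    also have "\<dots> \<longleftrightarrow> j < 2^K" by (simp only: of_nat_le_iff Suc_le_eq)
    finally show ?thesis .
  qed
  show ?thesis
  proof (intro set_eqI iffI)
    fix u assume "u \<in> {u\<in>Zlev K. interval_of u \<subseteq> {aa..<1}}"
    moreover obtain k j where "u = (k,j)" by (cases u)
    ultimately show "u \<in> Pair K ` {j0..<2^K}" using per by auto
  next
    fix u assume "u \<in> Pair K ` {j0..<2^K}"
    then obtain j where "u = (K,j)" "j0 \<le> j" "j < 2^K" by auto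
    thus "u \<in> {u\<in>Zlev K. interval_of u \<subseteq> {aa..<1}}" using per by auto
  qed
qed

lemma final:
  assumes I: "Inv st" and nc: "\<not> alg_cond S aa st"
  shows "alg_output aa st = (\<Sum>u\<in>{u\<in>Zlev K. interval_of u \<subseteq> {aa..<1}}. p u)"
proof -
  obtain z mz pr hist n where st: "st = (z,mz,pr,hist,n)" by (cases st)
  obtain n' i where z: "z = (n',i)" by (cases z)
  have nn: "n' = n" using I unfolding st z Inv_simp by simp
  have zS: "(n,i) \<in> S" and i2: "i*2^(K-n) \<le> j0" and i3: "j0 < (i+1)*2^(K-n)" and mz: "mz = p (n,i)"
    and prv: "pr = (\<Sum>j\<in>{(i+1)*2^(K-n)..<2^K}. p (K,j))"
    using I unfolding st z Inv_simp nn by auto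
  have stop: "alpha_of (n,i) = aa \<or> is_leaf S (n,i)" using nc unfolding st z nn alg_cond_def by auto
  have nK: "n \<le> K" and iless: "i < 2^n" using S_Zstar[OF zS] by auto
  define d where "d = K - n"
  have bnd: "(i+1)*2^d \<le> 2^K"
  proof -
    have "(i+1)*2^d \<le> 2^n * 2^d" using iless by (intro mult_le_mono1) simp
    also have "\<dots> = 2^K" using nK unfolding d_def by (simp add: power_add[symmetric])
    finally show ?thesis .
  qed
  have al: "alpha_of (n,i) = real (i*2^d) / 2^K" unfolding d_def by (rule alpha_K[OF nK])
  have be: "beta_of (n,i) = real ((i+1)*2^d) / 2^K" unfolding d_def by (rule beta_K[OF nK])
  have "(\<Sum>u\<in>{u\<in>Zlev K. interval_of u \<subseteq> {aa..<1}}. p u) = (\<Sum>j\<in>{j0..<2^K}. p (K,j))"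
    unfolding target_set by (subst sum.reindex) (auto simp: inj_on_def)
  also have "\<dots> = (\<Sum>j\<in>{j0..<(i+1)*2^d}. p (K,j)) + pr"
    unfolding prv d_def[symmetric] using bnd i3 unfolding d_def
    by (intro sum.atLeastLessThan_concat[symmetric]) auto
  finally have tot: "(\<Sum>u\<in>{u\<in>Zlev K. interval_of u \<subseteq> {aa..<1}}. p u) = (\<Sum>j\<in>{j0..<(i+1)*2^d}. p (K,j)) + pr" .
  have dpos: "(0::real) < 2^d" by simp
  have key: "(\<Sum>j\<in>{j0..<(i+1)*2^d}. p (K,j)) = (beta_of (n,i) - aa) / (beta_of (n,i) - alpha_of (n,i)) * p (n,i)"
  proof (cases "alpha_of (n,i) = aa")
    case True
    hence "real (i*2^d)/2^K = real j0/2^K" unfolding al by simp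
    hence jeq: "j0 = i*2^d" by (simp only: real_frac_eq)
    have "(\<Sum>j\<in>{j0..<(i+1)*2^d}. p (K,j)) = blk p K n i" unfolding blk_def jeq d_def by simp
    also have "\<dots> = p (n,i)" using nK iless by (intro blk_eq) auto
    finally show ?thesis using True unfolding al be by (simp add: field_simps)
  next
    case False
    hence leaf: "is_leaf S (n,i)" using stop by simp
    have p0: "(0::nat) < 2^d" by simp
    have each: "p (K,j) = p (n,i) / 2^d" if "j \<in> {j0..<(i+1)*2^d}" for j
    proof -
      have "j div 2^d = i" using that i2 div_char[OF p0] unfolding d_def by auto
      hence "p (K,j) * 2^d = p (n,i)" using leaf_price[OF zS leaf] unfolding d_def by simp
      thus ?thesis using dpos by (simp add: field_simps)
    qed
    have "(\<Sum>j\<in>{j0..<(i+1)*2^d}. p (K,j)) = (\<Sum>j\<in>{j0..<(i+1)*2^d}. p (n,i) / 2^d)"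
      using each by (intro sum.cong) auto
    also have "\<dots> = real ((i+1)*2^d - j0) * (p (n,i) / 2^d)" by simp
    also have "\<dots> = (real ((i+1)*2^d) - real j0) / 2^d * p (n,i)"
      using i3 unfolding d_def[symmetric] by (simp add: of_nat_diff)
    also have "(real ((i+1)*2^d) - real j0) / 2^d = (beta_of (n,i) - aa) / (beta_of (n,i) - alpha_of (n,i))"
      unfolding al be by (simp add: field_simps)
    finally show ?thesis .
  qed
  show ?thesis unfolding tot st z nn alg_output_def using key mz by simp
qed

end

theorem theorem5:
  fixes K :: nat and b :: "nat \<Rightarrow> real" and S :: "node set"
    and th eta :: "node \<Rightarrow> real" and a :: real
  assumes "1 \<le> K"
    and "\<forall>k\<le>K. 0 < b k"
    and "is_lcmm_tree K S"
    and "coherent K b S th eta"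
    and "a \<in> Omega K"
  shows "\<exists>z mz pr hist n.
           alg_run K b S th eta a = Some (z, mz, pr, hist, n) \<and>
           (\<forall>(u, m) \<in> set hist. m = lcmm_price K b S th eta u) \<and>
           alg_output a (z, mz, pr, hist, n) =
             (\<Sum>u\<in>{u\<in>Zlev K. interval_of u \<subseteq> {a..<1}}. lcmm_price K b S th eta u) \<and>
           n \<le> prec a"
proof -
  from assms(5) obtain j0 where jj0: "j0 < 2^K" "a = real j0 / 2^K" by (auto simp: Omega_def)
  interpret L2 K b S th eta j0 using assms jj0 by unfold_locales auto
  have "\<exists>t. while_option (alg_cond S a) (alg_step K b S th eta a) alg_init = Some t"
    unfolding jj0(2)
    by (rule wf_rel_while_option_Some[where R="measure (\<lambda>s. K - fst (fst s))" and P=Inv])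
       (use inv_step inv_init in auto)
  then obtain t where t: "alg_run K b S th eta a = Some t" unfolding alg_run_def by blast
  have It: "Inv t" using while_option_rule[where P=Inv, OF _ t[unfolded alg_run_def jj0(2)] inv_init]
    inv_step by blast
  have nct: "\<not> alg_cond S aa t" using while_option_stop[OF t[unfolded alg_run_def jj0(2)]] .
  obtain z mz pr hist n where tt: "t = (z,mz,pr,hist,n)" by (cases t)
  have h: "(\<forall>(u, m) \<in> set hist. m = p u) \<and> n \<le> prec aa"
    using It unfolding tt Inv_def by auto
  have o: "alg_output aa t = (\<Sum>u\<in>{u\<in>Zlev K. interval_of u \<subseteq> {aa..<1}}. p u)"
    by (rule final[OF It nct])
  show ?thesis using t h o unfolding tt jj0(2) by blast
qed

end
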